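(* Let $\mathcal A\subset\mathbb R^n$ be compact with diameter $D_{\mathcal A}<\infty$ and symmetric ($\mathcal A=-\mathcal A$), let $\mathcal X=\mathrm{lin}(\mathcal A)$, let $f$ have $L$-Lipschitz gradient, and let $\eta>1$. Run the AC-FW algorithm with the Matching Pursuit subroutine and a damping sequence satisfying Condition (D), with $L_0>0$. Then the subroutine satisfies parts (i) and (ii) of Condition (S), and for every $t\ge0$, $$|\mathcal G\cap\mathcal I_\eta\cap[t]|\ge t+1-\left\lfloor\log_\eta\!\left(\frac{L}{rL_0}\right)\right\rfloor.$$ If additionally $f$ is convex and $R_{\mathcal A}<\infty$, then part (iii) of Condition (S) holds with $R=R_{\mathcal A}$.
   Context: $D_{\mathcal A}:=\sup_{x,y\in\mathcal A}\|x-y\|_2$; $f:\mathbb R^n\to\mathbb R$ is differentiable with $\|\nabla f(x)-\nabla f(y)\|_2\le L\|x-y\|_2$. $x^\star$ is an optimal solution of $\min_{x\in\mathcal X}f(x)$. Atomic norm: $\|x\|_{\mathcal A}:=\inf\{c>0:x\in c\cdot\mathrm{conv}(\mathcal A)\}$. $R_{\mathcal A}:=\max\{1,\sup\{\|x-x^\star\|_{\mathcal A}:x\in\mathrm{lin}(\mathcal A),\ f(x)\le f(x_0)\}\}$. For $x\ne y$, $\ell(x,y):=2|f(y)-f(x)-\nabla f(x)^\top(y-x)|/\|y-x\|_2^2$, $\ell(x,x):=0$. AC-FW algorithm: given $\{r_t\}_{t\ge0}$ and a subroutine, pick $x_{-1}\in\mathcal A$, $x_0\in\arg\min_{v\in\mathcal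 A}\nabla f(x_{-1})^\top v$, $L_0:=\ell(x_{-1},x_0)$. For $t=0,1,\dots$: $v_t\in\arg\min_{v\in\mathcal A}\nabla f(x_t)^\top v$; the subroutine returns $(d_t,\gamma_t^{\max})$; $\gamma_t:=\min\{\nabla f(x_t)^\top d_t/(L_t\|d_t\|_2^2),\gamma_t^{\max}\}$; $\bar x_{t+1}:=x_t-\gamma_td_t$; $L_{t+1}:=\max\{\ell(x_t,\bar x_{t+1}),r_tL_t\}$; $x_{t+1}:=\bar x_{t+1}$ if $f(\bar x_{t+1})<f(x_t)$, else $x_{t+1}:=x_t$. Matching Pursuit subroutine: $d_t:=-v_t$, $\gamma_t^{\max}:=\infty$. $[t]:=\{0,\dots,t\}$; $\mathcal I_\eta:=\{t\ge0:L_{t+1}\le\eta L_t\}$; $\mathcal G:=\{t\ge0:\gamma_t^{\max}\ge1\text{ or }\gamma_t<\gamma_t^{\max}\}$. Condition (D): $r_t\in(0,1]$ for all $t$ and $r:=\prod_{t\ge0}r_t\in(0,1]$. Condition (S): for all $t\ge0$: (i) $\|d_t\|_2\le D_{\mathcal A}$ and $x_t-\gamma d_t\in\mathcal X$ for all finite $\gamma\in[0,\gamma_t^{\max}]$; (ii) $\mathcal G$ is infinite; (iii) if $f$ is convex, there is $R\ge1$ independent of $t$ with $\nabla f(x_t)^\top d_t\ge(f(x_t)-f(x^\star))/R$. *)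

theory Defs
  imports "HOL-Analysis.Analysis"
begin

definition ell :: "('a::real_inner \<Rightarrow> real) \<Rightarrow> ('a \<Rightarrow> 'a) \<Rightarrow> 'a \<Rightarrow> 'a \<Rightarrow> real" where
  "ell f g x y = (if y = x then 0
     else 2 * \<bar>f y - f x - g x \<bullet> (y - x)\<bar> / (norm (y - x))\<^sup>2)"

definition atomic_norm :: "'a::real_vector set \<Rightarrow> 'a \<Rightarrow> ereal" where
  "atomic_norm A x = Inf {ereal c | c. c > 0 \<and> x \<in> (\<lambda>y. c *\<^sub>R y) ` (convex hull A)}"

definition R_atomic :: "'a::real_vector set \<Rightarrow> ('a \<Rightarrow> real) \<Rightarrow> 'a \<Rightarrow> 'a \<Rightarrow> ereal" where
  "R_atomic A f x0 xstar =
     max 1 (SUP x \<in> {x \<in> span A. f x \<le> f x0}. atomic_norm A (x - xstar))"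

text \<open>A run of the AC-FW algorithm with damping sequence r, started at xm1 (= x_{-1}).
  v t: linear minimization oracle output; (d t, gmax t): output of the subroutine;
  gam t: step size gamma_t; Lk t: L_t; x t: iterates.\<close>
definition acfw_run ::
  "'a::real_inner set \<Rightarrow> ('a \<Rightarrow> real) \<Rightarrow> ('a \<Rightarrow> 'a) \<Rightarrow> (nat \<Rightarrow> real) \<Rightarrow> 'a \<Rightarrow>
   (nat \<Rightarrow> 'a) \<Rightarrow> (nat \<Rightarrow> 'a) \<Rightarrow> (nat \<Rightarrow> 'a) \<Rightarrow> (nat \<Rightarrow> ereal) \<Rightarrow> (nat \<Rightarrow> real) \<Rightarrow>
   (nat \<Rightarrow> real) \<Rightarrow> bool" where
  "acfw_run A f g r xm1 x v d gmax gam Lk \<longleftrightarrow>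
     xm1 \<in> A \<and> x 0 \<in> A \<and> (\<forall>w\<in>A. g xm1 \<bullet> x 0 \<le> g xm1 \<bullet> w) \<and>
     Lk 0 = ell f g xm1 (x 0) \<and>
     (\<forall>t. v t \<in> A \<and> (\<forall>w\<in>A. g (x t) \<bullet> v t \<le> g (x t) \<bullet> w) \<and>
          ereal (gam t) = min (ereal (g (x t) \<bullet> d t / (Lk t * (norm (d t))\<^sup>2))) (gmax t) \<and>
          (let xb = x t - gam t *\<^sub>R d t in
             Lk (Suc t) = max (ell f g (x t) xb) (r t * Lk t) \<and>
             x (Suc t) = (if f xb < f (x t) then xb else x t)))"

definition mp_subroutine :: "(nat \<Rightarrow> 'a::real_vector) \<Rightarrow> (nat \<Rightarrow> 'a) \<Rightarrow> (nat \<Rightarrow> ereal) \<Rightarrow> bool" where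
  "mp_subroutine v d gmax \<longleftrightarrow> (\<forall>t. d t = - v t \<and> gmax t = \<infinity>)"

definition good_steps :: "(nat \<Rightarrow> ereal) \<Rightarrow> (nat \<Rightarrow> real) \<Rightarrow> nat set" where
  "good_steps gmax gam = {t. gmax t \<ge> 1 \<or> ereal (gam t) < gmax t}"

definition I_eta :: "real \<Rightarrow> (nat \<Rightarrow> real) \<Rightarrow> nat set" where
  "I_eta \<eta> Lk = {t. Lk (Suc t) \<le> \<eta> * Lk t}"

end

theory Submission imports Defs begin


lemma line_deriv:
  fixes f :: "'a::real_inner \<Rightarrow> real"
  assumes grad: "\<And>y. GDERIV f y :> g y"
  shows "((\<lambda>s. f (x + s *\<^sub>R h)) has_real_derivative (g (x + s *\<^sub>R h) \<bullet> h)) (at s)"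
proof -
  have d1: "((\<lambda>s::real. x + s *\<^sub>R h) has_derivative (\<lambda>t. t *\<^sub>R h)) (at s)"
    by (auto intro!: derivative_eq_intros)
  have d2: "(f has_derivative (\<lambda>k. k \<bullet> g (x + s *\<^sub>R h))) (at (x + s *\<^sub>R h))"
    using grad unfolding gderiv_def .
  have "((\<lambda>s. f (x + s *\<^sub>R h)) has_derivative (\<lambda>t. (t *\<^sub>R h) \<bullet> g (x + s *\<^sub>R h))) (at s)"
    using has_derivative_compose[OF d1 d2] by (simp add: o_def)
  moreover have "(\<lambda>t. (t *\<^sub>R h) \<bullet> g (x + s *\<^sub>R h)) = (*) (g (x + s *\<^sub>R h) \<bullet> h)"
    by (auto simp: inner_commute)
  ultimately show ?thesis unfolding has_field_derivative_def by simp
qed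

lemma descent:
  fixes f :: "'a::real_inner \<Rightarrow> real"
  assumes grad: "\<And>y. GDERIV f y :> g y"
    and lip: "\<And>y z. norm (g y - g z) \<le> L * norm (y - z)"
  shows "\<bar>f (x + h) - f x - g x \<bullet> h\<bar> \<le> L / 2 * (norm h)\<^sup>2"
proof -
  have key: "\<bar>(g (x + s *\<^sub>R h) - g x) \<bullet> h\<bar> \<le> L * s * (norm h)^2" if "0 \<le> s" for s
  proof -
    have "\<bar>(g (x + s *\<^sub>R h) - g x) \<bullet> h\<bar> \<le> norm (g (x + s *\<^sub>R h) - g x) * norm h"
      by (rule Cauchy_Schwarz_ineq2)
    also have "\<dots> \<le> (L * norm (s *\<^sub>R h)) * norm h"
      using lip[of "x + s *\<^sub>R h" x] by (intro mult_right_mono) auto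
    also have "\<dots> = L * s * (norm h)^2" using that by (simp add: power2_eq_square)
    finally show ?thesis .
  qed
  define \<phi> where "\<phi> s = f (x + s *\<^sub>R h) - s * (g x \<bullet> h) - L / 2 * s^2 * (norm h)^2" for s
  define \<psi> where "\<psi> s = f (x + s *\<^sub>R h) - s * (g x \<bullet> h) + L / 2 * s^2 * (norm h)^2" for s
  have "\<phi> 1 \<le> \<phi> 0"
  proof (rule DERIV_nonpos_imp_nonincreasing[of 0 1])
    fix s :: real assume s: "0 \<le> s" "s \<le> 1"
    have "(\<phi> has_real_derivative (g (x + s *\<^sub>R h) \<bullet> h - g x \<bullet> h - L * s * (norm h)^2)) (at s)"
      unfolding \<phi>_def
      by (rule derivative_eq_intros line_deriv[OF grad] refl | simp)+
    moreover have "g (x + s *\<^sub>R h) \<bullet> h - g x \<bullet> h - L * s * (norm h)^2 \<le> 0"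
      using key[OF s(1)] by (simp add: inner_diff_left)
    ultimately show "\<exists>y. (\<phi> has_real_derivative y) (at s) \<and> y \<le> 0" by blast
  qed simp
  moreover have "\<psi> 0 \<le> \<psi> 1"
  proof (rule DERIV_nonneg_imp_nondecreasing[of 0 1])
    fix s :: real assume s: "0 \<le> s" "s \<le> 1"
    have "(\<psi> has_real_derivative (g (x + s *\<^sub>R h) \<bullet> h - g x \<bullet> h + L * s * (norm h)^2)) (at s)"
      unfolding \<psi>_def
      by (rule derivative_eq_intros line_deriv[OF grad] refl | simp)+
    moreover have "g (x + s *\<^sub>R h) \<bullet> h - g x \<bullet> h + L * s * (norm h)^2 \<ge> 0"
      using key[OF s(1)] by (simp add: inner_diff_left)
    ultimately show "\<exists>y. (\<psi> has_real_derivative y) (at s) \<and> y \<ge> 0" by blast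
  qed simp
  ultimately have "f (x + h) - f x - g x \<bullet> h \<le> L / 2 * (norm h)\<^sup>2 \<and> - (f (x + h) - f x - g x \<bullet> h) \<le> L / 2 * (norm h)\<^sup>2"
    unfolding \<phi>_def \<psi>_def by simp
  then show ?thesis by (simp only: abs_le_iff)
qed
lemma ell_le:
  fixes f :: "'a::real_inner \<Rightarrow> real"
  assumes grad: "\<And>y. GDERIV f y :> g y"
    and lip: "\<And>y z. norm (g y - g z) \<le> L * norm (y - z)"
    and ne: "y \<noteq> x"
  shows "ell f g x y \<le> L"
proof -
  have "\<bar>f (x + (y - x)) - f x - g x \<bullet> (y - x)\<bar> \<le> L / 2 * (norm (y - x))\<^sup>2"
    by (rule descent[OF grad lip])
  moreover have "norm (y - x) > 0" using ne by simp
  ultimately show ?thesis using ne unfolding ell_def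
    by (simp add: divide_le_eq)
qed

lemma convex_tangent:
  fixes f :: "'a::real_inner \<Rightarrow> real"
  assumes grad: "\<And>y. GDERIV f y :> g y" and cvx: "convex_on UNIV f"
  shows "f z \<ge> f x + g x \<bullet> (z - x)"
proof -
  define h where "h = z - x"
  define \<phi> where "\<phi> s = f (x + s *\<^sub>R h)" for s :: real
  have "convex_on UNIV \<phi>"
    unfolding convex_on_def
  proof (intro conjI ballI allI impI convex_UNIV)
    fix a b u v :: real assume uv: "u \<ge> 0" "v \<ge> 0" "u + v = 1"
    have "x + (u *\<^sub>R a + v *\<^sub>R b) *\<^sub>R h = u *\<^sub>R (x + a *\<^sub>R h) + v *\<^sub>R (x + b *\<^sub>R h)"
    proof -
      have "x = u *\<^sub>R x + v *\<^sub>R x" using uv(3) by (metis scaleR_add_left scaleR_one)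
      then show ?thesis by (simp add: algebra_simps)
    qed
    then show "\<phi> (u *\<^sub>R a + v *\<^sub>R b) \<le> u * \<phi> a + v * \<phi> b"
      unfolding \<phi>_def using cvx uv unfolding convex_on_def by simp
  qed
  moreover have "(\<phi> has_real_derivative (g (x + 0 *\<^sub>R h) \<bullet> h)) (at 0 within UNIV)"
    unfolding \<phi>_def by (rule line_deriv[OF grad])
  ultimately have "\<phi> 1 - \<phi> 0 \<ge> (g (x + 0 *\<^sub>R h) \<bullet> h) * (1 - 0)"
    by (intro convex_on_imp_above_tangent) auto
  then show ?thesis unfolding \<phi>_def h_def by simp
qed
theorem lemma6:
  fixes A :: "'a::euclidean_space set" and f :: "'a \<Rightarrow> real" and g :: "'a \<Rightarrow> 'a"
    and L \<eta> rr :: real and r :: "nat \<Rightarrow> real" and xm1 :: 'a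
    and x v d :: "nat \<Rightarrow> 'a" and gmax :: "nat \<Rightarrow> ereal" and gam Lk :: "nat \<Rightarrow> real"
  assumes cpt: "compact A"
    and sym: "A = uminus ` A"
    and grad: "\<And>y. GDERIV f y :> g y"
    and lip: "\<And>y z. norm (g y - g z) \<le> L * norm (y - z)"
    and eta: "\<eta> > 1"
    and damp: "\<And>t. 0 < r t \<and> r t \<le> 1"
    and prod: "(\<lambda>n. \<Prod>t<n. r t) \<longlonglongrightarrow> rr" and rr_pos: "0 < rr" and rr_le: "rr \<le> 1"
    and run: "acfw_run A f g r xm1 x v d gmax gam Lk"
    and mp: "mp_subroutine v d gmax"
    and L0: "Lk 0 > 0"
  shows "(\<forall>t. norm (d t) \<le> diameter A \<and>
              (\<forall>\<gamma>::real. 0 \<le> \<gamma> \<and> ereal \<gamma> \<le> gmax t \<longrightarrow> x t - \<gamma> *\<^sub>R d t \<in> span A))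
       \<and> infinite (good_steps gmax gam)
       \<and> (\<forall>t. real (card (good_steps gmax gam \<inter> I_eta \<eta> Lk \<inter> {0..t}))
               \<ge> real t + 1 - real_of_int \<lfloor>log \<eta> (L / (rr * Lk 0))\<rfloor>)
       \<and> (\<forall>xstar. xstar \<in> span A \<and> (\<forall>y\<in>span A. f xstar \<le> f y) \<longrightarrow>
            convex_on UNIV f \<longrightarrow> R_atomic A f (x 0) xstar \<noteq> \<infinity> \<longrightarrow>
            (\<forall>t. g (x t) \<bullet> d t \<ge> (f (x t) - f xstar) / real_of_ereal (R_atomic A f (x 0) xstar)))"
proof -
  have dv: "d t = - v t" and gm: "gmax t = \<infinity>" for t using mp unfolding mp_subroutine_def by auto
  have xm1A: "xm1 \<in> A" and x0A: "x 0 \<in> A" and Lk0: "Lk 0 = ell f g xm1 (x 0)"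
    using run unfolding acfw_run_def by auto
  have vA: "v t \<in> A" and vmin: "\<And>w. w \<in> A \<Longrightarrow> g (x t) \<bullet> v t \<le> g (x t) \<bullet> w"
    and LkS: "Lk (Suc t) = max (ell f g (x t) (x t - gam t *\<^sub>R d t)) (r t * Lk t)"
    and xS: "x (Suc t) = (if f (x t - gam t *\<^sub>R d t) < f (x t) then x t - gam t *\<^sub>R d t else x t)"
    for t using run unfolding acfw_run_def Let_def by auto
  have negA: "- w \<in> A" if "w \<in> A" for w
  proof -
    from that sym have "w \<in> uminus ` A" by simp
    then obtain u where "u \<in> A" "w = - u" by auto
    then show ?thesis by simp
  qed
  have bA: "bounded A" using cpt compact_imp_bounded by blast
  have xspan: "x t \<in> span A" for t
  proof (induction t)
    case 0 then show ?case using x0A span_base by blast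
  next
    case (Suc t)
    have "x t - gam t *\<^sub>R d t \<in> span A"
      using Suc vA[of t] by (simp add: dv span_diff span_add span_scale span_base span_neg)
    then show ?case using Suc xS[of t] by simp
  qed
  have part1: "\<forall>t. norm (d t) \<le> diameter A \<and>
              (\<forall>\<gamma>::real. 0 \<le> \<gamma> \<and> ereal \<gamma> \<le> gmax t \<longrightarrow> x t - \<gamma> *\<^sub>R d t \<in> span A)"
  proof (intro allI conjI impI)
    fix t
    have "dist (v t) (- v t) \<le> diameter A"
      using diameter_bounded_bound[OF bA vA[of t] negA[OF vA[of t]]] .
    moreover have "dist (v t) (- v t) = 2 * norm (v t)"
      by (simp add: dist_norm scaleR_2[symmetric] del: scaleR_2)
    moreover have "norm (v t) \<ge> 0" by simp
    ultimately show "norm (d t) \<le> diameter A" unfolding dv norm_minus_cancel by linarith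
    fix \<gamma> :: real
    show "x t - \<gamma> *\<^sub>R d t \<in> span A"
      using xspan[of t] vA[of t] by (simp add: dv span_diff span_add span_scale span_base span_neg)
  qed
  have goodU: "good_steps gmax gam = UNIV" unfolding good_steps_def by (simp add: gm)
  have Lpos: "L \<ge> Lk 0"
  proof -
    have "xm1 \<noteq> x 0" using L0 Lk0 unfolding ell_def by auto
    then have "x 0 \<noteq> xm1" by simp
    then show ?thesis using ell_le[OF grad lip, of "x 0" xm1] Lk0 by simp
  qed
  have ellL: "ell f g a b \<le> L" for a b
    using ell_le[OF grad lip, of b a] Lpos L0 unfolding ell_def by (cases "b = a") auto
  have LkB: "0 < Lk t \<and> Lk t \<le> L" for t
  proof (induction t)
    case 0 then show ?case using L0 Lpos by simp
  next
    case (Suc t)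
    have "r t * Lk t > 0" using damp[of t] Suc by simp
    moreover have "r t * Lk t \<le> L"
      proof -
      have "r t * Lk t \<le> 1 * Lk t" using damp[of t] Suc by (intro mult_right_mono) auto
      then show ?thesis using Suc by linarith
    qed
    ultimately show ?case using LkS[of t] ellL by (simp add: le_max_iff_disj)
  qed
  define I where "I = I_eta \<eta> Lk"
  define K where "K n = card ({..<n} - I)" for n
  define P where "P n = (\<Prod>t<n. r t)" for n
  have Ppos: "P n > 0" for n unfolding P_def using damp by (simp add: prod_pos)
  have growth: "Lk n \<ge> \<eta> ^ K n * P n * Lk 0" for n
  proof (induction n)
    case 0 then show ?case by (simp add: K_def P_def)
  next
    case (Suc n)
    have PS: "P (Suc n) = P n * r n" unfolding P_def by simp
    have ge: "Lk (Suc n) \<ge> r n * Lk n" using LkS[of n] by simp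
    have base: "\<eta> ^ K n * P n * Lk 0 \<ge> 0" using eta Ppos[of n] L0 by (simp add: less_imp_le)
    show ?case
    proof (cases "n \<in> I")
      case True
      then have "{..<Suc n} - I = {..<n} - I" using less_Suc_eq by auto
      then have "K (Suc n) = K n" unfolding K_def by simp
      then have "\<eta> ^ K (Suc n) * P (Suc n) * Lk 0 = r n * (\<eta> ^ K n * P n * Lk 0)"
        by (simp add: PS)
      also have "\<dots> \<le> r n * Lk n" using Suc damp[of n] by simp
      finally show ?thesis using ge by linarith
    next
      case False
      then have "{..<Suc n} - I = insert n ({..<n} - I)" using less_Suc_eq by auto
      then have "K (Suc n) = Suc (K n)" unfolding K_def by simp
      then have "\<eta> ^ K (Suc n) * P (Suc n) * Lk 0 = r n * (\<eta> * (\<eta> ^ K n * P n * Lk 0))"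
        by (simp add: PS)
      also have "\<dots> \<le> \<eta> * (\<eta> ^ K n * P n * Lk 0)"
        using damp[of n] base eta by (intro mult_left_le_one_le) auto
      also have "\<dots> \<le> \<eta> * Lk n" using Suc eta by simp
      also have "\<dots> < Lk (Suc n)" using False unfolding I_def I_eta_def by simp
      finally show ?thesis by simp
    qed
  qed
  have decP: "decseq P"
    by (rule decseq_SucI) (use Ppos damp in \<open>simp add: P_def mult_le_cancel_left1\<close>)
  have Pge: "rr \<le> P n" for n
    using decseq_ge[OF decP] prod unfolding P_def by blast
  have Kbound: "real (K n) \<le> real_of_int \<lfloor>log \<eta> (L / (rr * Lk 0))\<rfloor>" for n
  proof -
    have "\<eta> ^ K n * rr * Lk 0 \<le> \<eta> ^ K n * P n * Lk 0"
      using Pge[of n] eta L0 by (simp add: mult_right_mono)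
    also have "\<dots> \<le> L" using growth[of n] LkB[of n] by linarith
    finally have "\<eta> ^ K n \<le> L / (rr * Lk 0)"
      using rr_pos L0 by (simp add: pos_le_divide_eq mult.assoc)
    moreover have "L / (rr * Lk 0) > 0" using rr_pos L0 LkB[of 0] by simp
    ultimately have "real (K n) \<le> log \<eta> (L / (rr * Lk 0))"
      using eta by (simp add: le_log_iff powr_realpow)
    then have "int (K n) \<le> \<lfloor>log \<eta> (L / (rr * Lk 0))\<rfloor>" by (simp add: le_floor_iff)
    then show ?thesis by (metis of_int_le_iff of_int_of_nat_eq)
  qed
  have part3: "\<forall>t. real (card (good_steps gmax gam \<inter> I_eta \<eta> Lk \<inter> {0..t}))
               \<ge> real t + 1 - real_of_int \<lfloor>log \<eta> (L / (rr * Lk 0))\<rfloor>"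
  proof
    fix t
    have e: "{0..t} = {..<Suc t}" by auto
    have "card {..<Suc t} = card ({..<Suc t} \<inter> I) + K (Suc t)"
      unfolding K_def by (rule card_Int_Diff) simp
    then have "real (card (good_steps gmax gam \<inter> I_eta \<eta> Lk \<inter> {0..t})) = real t + 1 - real (K (Suc t))"
      by (simp add: goodU e I_def Int_commute)
    then show "real (card (good_steps gmax gam \<inter> I_eta \<eta> Lk \<inter> {0..t}))
               \<ge> real t + 1 - real_of_int \<lfloor>log \<eta> (L / (rr * Lk 0))\<rfloor>"
      using Kbound[of "Suc t"] by linarith
  qed
  have part4: "\<forall>xstar. xstar \<in> span A \<and> (\<forall>y\<in>span A. f xstar \<le> f y) \<longrightarrow>
            convex_on UNIV f \<longrightarrow> R_atomic A f (x 0) xstar \<noteq> \<infinity> \<longrightarrow>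
            (\<forall>t. g (x t) \<bullet> d t \<ge> (f (x t) - f xstar) / real_of_ereal (R_atomic A f (x 0) xstar))"
  proof (intro allI impI)
    fix xstar t
    assume xs: "xstar \<in> span A \<and> (\<forall>y\<in>span A. f xstar \<le> f y)"
      and cvx: "convex_on UNIV f" and Rfin: "R_atomic A f (x 0) xstar \<noteq> \<infinity>"
    define R where "R = R_atomic A f (x 0) xstar"
    define R' where "R' = real_of_ereal R"
    have R1: "R \<ge> 1" unfolding R_def R_atomic_def by simp
    have Rf: "R \<noteq> \<infinity>" using Rfin R_def by simp
    have RR: "R = ereal R'" unfolding R'_def using R1 Rf
      by (cases R) auto
    have R'1: "R' \<ge> 1" using R1 RR by simp
    have fdec: "f (x t) \<le> f (x 0)" for t
    proof (induction t)
      case (Suc t) then show ?case using xS[of t] by auto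
    qed simp
    have an: "atomic_norm A (x t - xstar) \<le> ereal R'"
    proof -
      have "atomic_norm A (x t - xstar) \<le> (SUP y \<in> {y \<in> span A. f y \<le> f (x 0)}. atomic_norm A (y - xstar))"
        by (rule SUP_upper) (use xspan fdec in auto)
      also have "\<dots> \<le> R" unfolding R_def R_atomic_def by simp
      finally show ?thesis using RR by simp
    qed
    define M where "M = g (x t) \<bullet> d t"
    have wM: "g (x t) \<bullet> w \<le> M" if "w \<in> A" for w
      using vmin[OF negA[OF that], of t] unfolding M_def dv by simp
    have M0: "M \<ge> 0" using wM[OF vA[of t]] wM[OF negA[OF vA[of t]]] by simp
    have hullM: "convex hull A \<subseteq> {w. g (x t) \<bullet> w \<le> M}"
      by (rule hull_minimal) (use wM convex_halfspace_le in auto)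
    define y where "y = g (x t) \<bullet> (x t - xstar)"
    have fy: "f (x t) - f xstar \<le> y"
      using convex_tangent[OF grad cvx, of "x t" xstar] unfolding y_def
      by (simp add: inner_diff_right)
    have yc: "y \<le> (R' + e) * M" if e: "e > 0" for e
    proof -
      have "atomic_norm A (x t - xstar) < ereal (R' + e)" proof -
        have "ereal R' < ereal (R' + e)" using e by simp
        then show ?thesis using an by (rule le_less_trans[rotated])
      qed
      then obtain c where c: "c > 0" "x t - xstar \<in> (\<lambda>y. c *\<^sub>R y) ` (convex hull A)" "ereal c < ereal (R' + e)"
        unfolding atomic_norm_def Inf_less_iff by auto
      then obtain w where w: "w \<in> convex hull A" "x t - xstar = c *\<^sub>R w" by auto
      have "y = c * (g (x t) \<bullet> w)" unfolding y_def w(2) by simp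
      also have "\<dots> \<le> c * M" using hullM w(1) c(1) by (auto intro: mult_left_mono)
      also have "\<dots> \<le> (R' + e) * M" using c(3) M0 by (simp add: mult_right_mono)
      finally show ?thesis .
    qed
    have "y \<le> R' * M"
    proof (rule field_le_epsilon)
      fix e :: real assume e: "e > 0"
      have "y \<le> (R' + e / (M + 1)) * M" using yc e M0 by simp
      also have "\<dots> = R' * M + e * (M / (M + 1))" by (simp add: algebra_simps)
      also have "\<dots> \<le> R' * M + e * 1" using M0 e by (intro add_left_mono mult_left_mono) auto
      finally show "y \<le> R' * M + e" by simp
    qed
    then have "f (x t) - f xstar \<le> R' * M" using fy by linarith
    then show "g (x t) \<bullet> d t \<ge> (f (x t) - f xstar) / real_of_ereal (R_atomic A f (x 0) xstar)"
      using R'1 unfolding M_def R'_def R_def by (simp add: divide_le_eq mult.commute)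
  qed
  show ?thesis using part1 part3 part4 goodU by simp
qed

end
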